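(* Let $p(L,M,D;\mu=1)$ be a generative reasoning model, let $\alpha\in L$, and let $\Delta\subseteq L$ be finite with $[\![\Delta]\!]_p\neq\emptyset$. Then $p(\alpha\mid\Delta)=1$ if and only if $\Delta\mathrel{|\!\!\equiv}\alpha$.
   Context: Fix a multiset of data $\{d_1,\dots,d_K\}$ with $K\ge1$, and a propositional language $L$ over finitely many atoms, with set of models (truth assignments) $\mathcal M$. A function $m:\{d_1,\dots,d_K\}\to\mathcal M$ assigns to each datum the model it supports. The probability of a model $n$ is $p(n)=|\{k:m(d_k)=n\}|/K$. For a parameter $\mu\in[0,1]$ and $\alpha\in L$, set $p(\alpha\mid m)=\mu$ if $m$ satisfies $\alpha$ and $1-\mu$ otherwise. For finite $\Delta\subseteq L$, set $p(\Delta\mid m)=\prod_{\beta\in\Delta}p(\beta\mid m)$, which is $1$ for empty $\Delta$. Define $$p(\alpha\mid\Delta)=\frac{\sum_{m}p(\alpha\mid m)p(\Delta\mid m)p(m)}{\sum_m p(\Delta\mid m)p(m)}.$$ This is the generative reasoning model $p(L,M,D;\mu)$. For $\mu=1$ the expression is evaluated at $\mu=1$, and it is undefined when the denominator is $0$. Notation: - $[\![\Delta]\!]$ is the set of models satisfying all formulas in $\Delta$, and $[\![\alpha]\!]=[\![\{\alpha\}]\!]$. - $[\![\Delta]\!]_p=\{m\in[\![\Delta]\!]:p(m)\neq0\}$. - $\Delta\mathrel{|\!\!\equiv}\alpha$ (empirical consequence) means $[\![\Delta]\!]_p\subseteq[\![\alpha]\!]_p$. *)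

theory Defs
  imports "HOL-Analysis.Analysis"
begin

datatype 'a form = Atom 'a | Bot | Neg "'a form" | Conj "'a form" "'a form"
  | Disj "'a form" "'a form" | Imp "'a form" "'a form"

type_synonym 'a model = "'a \<Rightarrow> bool"

fun sat :: "'a model \<Rightarrow> 'a form \<Rightarrow> bool" where
  "sat v (Atom x) = v x"
| "sat v Bot = False"
| "sat v (Neg f) = (\<not> sat v f)"
| "sat v (Conj f g) = (sat v f \<and> sat v g)"
| "sat v (Disj f g) = (sat v f \<or> sat v g)"
| "sat v (Imp f g) = (sat v f \<longrightarrow> sat v g)"

text \<open>Data: a nonempty multiset of data D (given as a list, K = length D);
  m assigns to each datum the model it supports.\<close>
definition pmodel :: "'d list \<Rightarrow> ('d \<Rightarrow> 'a model) \<Rightarrow> 'a model \<Rightarrow> real" where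
  "pmodel D m n = real (length (filter (\<lambda>d. m d = n) D)) / real (length D)"

definition p_form_model :: "real \<Rightarrow> 'a form \<Rightarrow> 'a model \<Rightarrow> real" where
  "p_form_model \<mu> \<alpha> n = (if sat n \<alpha> then \<mu> else 1 - \<mu>)"

definition p_set_model :: "real \<Rightarrow> 'a form set \<Rightarrow> 'a model \<Rightarrow> real" where
  "p_set_model \<mu> \<Delta> n = (\<Prod>\<beta>\<in>\<Delta>. p_form_model \<mu> \<beta> n)"

text \<open>p(alpha | Delta) in the generative reasoning model p(L,M,D;mu);
  sums range over all models (finitely many, since 'a is finite).\<close>
definition p_cond :: "'d list \<Rightarrow> ('d \<Rightarrow> 'a::finite model) \<Rightarrow> real \<Rightarrow> 'a form \<Rightarrow> 'a form set \<Rightarrow> real" where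
  "p_cond D m \<mu> \<alpha> \<Delta> =
     (\<Sum>n\<in>UNIV. p_form_model \<mu> \<alpha> n * p_set_model \<mu> \<Delta> n * pmodel D m n) /
     (\<Sum>n\<in>UNIV. p_set_model \<mu> \<Delta> n * pmodel D m n)"

definition models :: "'a form set \<Rightarrow> 'a model set" where
  "models \<Delta> = {n. \<forall>\<beta>\<in>\<Delta>. sat n \<beta>}"

definition models_p :: "'d list \<Rightarrow> ('d \<Rightarrow> 'a model) \<Rightarrow> 'a form set \<Rightarrow> 'a model set" where
  "models_p D m \<Delta> = {n \<in> models \<Delta>. pmodel D m n \<noteq> 0}"

definition emp_conseq :: "'d list \<Rightarrow> ('d \<Rightarrow> 'a model) \<Rightarrow> 'a form set \<Rightarrow> 'a form \<Rightarrow> bool" where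
  "emp_conseq D m \<Delta> \<alpha> \<longleftrightarrow> models_p D m \<Delta> \<subseteq> models_p D m {\<alpha>}"

end

theory Submission
  imports Defs
begin

lemma ps1: "finite \<Delta> \<Longrightarrow> p_set_model 1 \<Delta> n = (if n \<in> models \<Delta> then 1 else 0)"
  unfolding p_set_model_def models_def p_form_model_def
  by (auto intro!: prod.neutral prod_zero)

lemma pm_nn: "pmodel D m n \<ge> 0"
  unfolding pmodel_def by simp

theorem corollary2:
  fixes D :: "'d list" and m :: "'d \<Rightarrow> 'a::finite model"
    and \<alpha> :: "'a form" and \<Delta> :: "'a form set"
  assumes "D \<noteq> []"
    and "finite \<Delta>"
    and "models_p D m \<Delta> \<noteq> {}"
  shows "p_cond D m 1 \<alpha> \<Delta> = 1 \<longleftrightarrow> emp_conseq D m \<Delta> \<alpha>"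
proof -
  define S where "S = (\<Sum>n\<in>UNIV. p_set_model 1 \<Delta> n * pmodel D m n)"
  define N where "N = (\<Sum>n\<in>UNIV. p_form_model 1 \<alpha> n * p_set_model 1 \<Delta> n * pmodel D m n)"
  define f where "f = (\<lambda>n. (1 - p_form_model 1 \<alpha> n) * p_set_model 1 \<Delta> n * pmodel D m n)"
  have fnn: "\<And>n. f n \<ge> 0" unfolding f_def using ps1[OF assms(2)] pm_nn[of D m]
    by (simp add: p_form_model_def)
  have SN: "S - N = sum f UNIV" unfolding S_def N_def f_def
    by (simp add: sum_subtractf[symmetric] algebra_simps)
  obtain n0 where n0: "n0 \<in> models \<Delta>" "pmodel D m n0 \<noteq> 0"
    using assms(3) unfolding models_p_def by auto
  have "S \<ge> p_set_model 1 \<Delta> n0 * pmodel D m n0" unfolding S_def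
    by (rule member_le_sum) (auto simp: ps1[OF assms(2)] pm_nn)
  moreover have "p_set_model 1 \<Delta> n0 * pmodel D m n0 > 0"
    using n0 pm_nn[of D m n0] by (simp add: ps1[OF assms(2)])
  ultimately have Spos: "S > 0" by linarith
  have "p_cond D m 1 \<alpha> \<Delta> = 1 \<longleftrightarrow> S - N = 0"
    unfolding p_cond_def S_def[symmetric] N_def[symmetric] using Spos by auto
  also have "\<dots> \<longleftrightarrow> (\<forall>n. f n = 0)"
    unfolding SN by (subst sum_nonneg_eq_0_iff) (auto intro: fnn)
  also have "\<dots> \<longleftrightarrow> emp_conseq D m \<Delta> \<alpha>"
    unfolding f_def emp_conseq_def models_p_def
    by (auto simp: ps1[OF assms(2)] p_form_model_def models_def)
  finally show ?thesis .
qed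

end
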